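(* Assume Assumption A-0 holds, let $T\ge1$, let $\psi_0,\dots,\psi_T$ be bounded measurable functions on $\mathbb{R}^d$ and $\boldsymbol\lambda=(\lambda_0,\dots,\lambda_T)\in\mathbb{R}^{T+1}$. Set $\rho_{T-1}=\lambda_{T-1}\psi_{T-1}+\frac{\lambda_T}{\kappa_T}L_T(\psi_T-m_T(\psi_T))$ and $\tilde{\boldsymbol\lambda}=(\lambda_0,\dots,\lambda_{T-2},1)\in\mathbb{R}^T$. Then $$\langle\tilde{\boldsymbol\lambda},\mathbf V_{T-1}(\psi_0,\dots,\psi_{T-2},\rho_{T-1})\,\tilde{\boldsymbol\lambda}\rangle=\langle\boldsymbol\lambda,\mathbf V_T(\psi_0,\dots,\psi_T)\,\boldsymbol\lambda\rangle-\lambda_T^2\sigma_T^2(\psi_T).$$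
   Context: Hidden Markov model with Markov chain $(X_t)$ on $\mathbb{R}^d$ having initial density $a_0$ and transition densities $a_t(x,x')$ w.r.t. a measure $\mu$, and observation densities $b_t(x,y)$; observations $y_1,\dots,y_T$ fixed. Filter density: $f_{0|0}=a_0$, $f_{t|t}(x)\propto b_t(x,y_t)\int f_{t-1|t-1}(u)a_t(u,x)\mu(du)$ (normalized). Notation: $m_t(\psi)=\int\psi f_{t|t}d\mu$; $L_t\psi(x)=\int a_t(x,u)b_t(u,y_t)\psi(u)\mu(du)$; $\mathbb{1}\equiv1$. Assumption A-0: for every $t\ge1$, $\sup_xL_t\mathbb{1}(x)<\infty$ and $L_t\mathbb{1}(x)>0$ for all $x$; $\kappa_t:=\int L_t\mathbb{1}\,f_{t-1|t-1}d\mu>0$. Variance quantities: $\sigma_t^2(\psi)=\int(\psi-m_t(\psi))^2f_{t|t}d\mu$; $V_0(\psi)=\sigma_0^2(\psi)$, $V_t(\psi)=\sigma_t^2(\psi)+\kappa_t^{-2}V_{t-1}(L_t\psi-m_t(\psi)L_t\mathbb{1})$; $V_{t,t}(\psi,\phi)=\frac12(V_t(\psi+\phi)-V_t(\psi)-V_t(\phi))$; for $r<t$, $V_{r,t}(\psi_r,\psi_t)=\kappa_t^{-1}V_{r,t-1}(\psi_r,L_t(\psi_t-m_t(\psi_t)))$, $V_{t,r}=V_{r,t}$ (with arguments swapped). $\mathbf V_T(\psi_{0:T})=(V_{s,t}(\psi_s,\psi_t))_{0\le s,t\le T}$. *)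

theory Defs
  imports "HOL-Analysis.Analysis"
begin

text \<open>State space: a Euclidean space 'a (= R^d), reference measure mu.
  a0: initial density; a t x x': transition density at time t; b t x y: observation density;
  y t: the fixed observations.\<close>

definition onefun :: "'a \<Rightarrow> real" where "onefun = (\<lambda>_. 1)"

primrec filt :: "'a measure \<Rightarrow> ('a \<Rightarrow> real) \<Rightarrow> (nat \<Rightarrow> 'a \<Rightarrow> 'a \<Rightarrow> real)
    \<Rightarrow> (nat \<Rightarrow> 'a \<Rightarrow> 'b \<Rightarrow> real) \<Rightarrow> (nat \<Rightarrow> 'b) \<Rightarrow> nat \<Rightarrow> 'a \<Rightarrow> real" where
  "filt mu a0 a b y 0 = a0"
| "filt mu a0 a b y (Suc t) =
    (let g = (\<lambda>x. b (Suc t) x (y (Suc t)) * (\<integral>u. filt mu a0 a b y t u * a (Suc t) u x \<partial>mu))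
     in (\<lambda>x. g x / (\<integral>z. g z \<partial>mu)))"

definition mt :: "'a measure \<Rightarrow> ('a \<Rightarrow> real) \<Rightarrow> (nat \<Rightarrow> 'a \<Rightarrow> 'a \<Rightarrow> real)
    \<Rightarrow> (nat \<Rightarrow> 'a \<Rightarrow> 'b \<Rightarrow> real) \<Rightarrow> (nat \<Rightarrow> 'b) \<Rightarrow> nat \<Rightarrow> ('a \<Rightarrow> real) \<Rightarrow> real" where
  "mt mu a0 a b y t psi = (\<integral>x. psi x * filt mu a0 a b y t x \<partial>mu)"

definition Lop :: "'a measure \<Rightarrow> (nat \<Rightarrow> 'a \<Rightarrow> 'a \<Rightarrow> real)
    \<Rightarrow> (nat \<Rightarrow> 'a \<Rightarrow> 'b \<Rightarrow> real) \<Rightarrow> (nat \<Rightarrow> 'b) \<Rightarrow> nat \<Rightarrow> ('a \<Rightarrow> real) \<Rightarrow> 'a \<Rightarrow> real" where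
  "Lop mu a b y t psi x = (\<integral>u. a t x u * b t u (y t) * psi u \<partial>mu)"

definition kappa :: "'a measure \<Rightarrow> ('a \<Rightarrow> real) \<Rightarrow> (nat \<Rightarrow> 'a \<Rightarrow> 'a \<Rightarrow> real)
    \<Rightarrow> (nat \<Rightarrow> 'a \<Rightarrow> 'b \<Rightarrow> real) \<Rightarrow> (nat \<Rightarrow> 'b) \<Rightarrow> nat \<Rightarrow> real" where
  "kappa mu a0 a b y t = (\<integral>x. Lop mu a b y t onefun x * filt mu a0 a b y (t - 1) x \<partial>mu)"

definition sigma2 :: "'a measure \<Rightarrow> ('a \<Rightarrow> real) \<Rightarrow> (nat \<Rightarrow> 'a \<Rightarrow> 'a \<Rightarrow> real)
    \<Rightarrow> (nat \<Rightarrow> 'a \<Rightarrow> 'b \<Rightarrow> real) \<Rightarrow> (nat \<Rightarrow> 'b) \<Rightarrow> nat \<Rightarrow> ('a \<Rightarrow> real) \<Rightarrow> real" where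
  "sigma2 mu a0 a b y t psi =
     (\<integral>x. (psi x - mt mu a0 a b y t psi)\<^sup>2 * filt mu a0 a b y t x \<partial>mu)"

primrec Vt :: "'a measure \<Rightarrow> ('a \<Rightarrow> real) \<Rightarrow> (nat \<Rightarrow> 'a \<Rightarrow> 'a \<Rightarrow> real)
    \<Rightarrow> (nat \<Rightarrow> 'a \<Rightarrow> 'b \<Rightarrow> real) \<Rightarrow> (nat \<Rightarrow> 'b) \<Rightarrow> nat \<Rightarrow> ('a \<Rightarrow> real) \<Rightarrow> real" where
  "Vt mu a0 a b y 0 psi = sigma2 mu a0 a b y 0 psi"
| "Vt mu a0 a b y (Suc t) psi =
     sigma2 mu a0 a b y (Suc t) psi
     + (kappa mu a0 a b y (Suc t))\<^sup>2 powi (-1) *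
       Vt mu a0 a b y t (\<lambda>x. Lop mu a b y (Suc t) psi x
                               - mt mu a0 a b y (Suc t) psi * Lop mu a b y (Suc t) onefun x)"

definition Vdiag :: "'a measure \<Rightarrow> ('a \<Rightarrow> real) \<Rightarrow> (nat \<Rightarrow> 'a \<Rightarrow> 'a \<Rightarrow> real)
    \<Rightarrow> (nat \<Rightarrow> 'a \<Rightarrow> 'b \<Rightarrow> real) \<Rightarrow> (nat \<Rightarrow> 'b) \<Rightarrow> nat \<Rightarrow> ('a \<Rightarrow> real) \<Rightarrow> ('a \<Rightarrow> real) \<Rightarrow> real" where
  "Vdiag mu a0 a b y t psi phi =
     (Vt mu a0 a b y t (\<lambda>x. psi x + phi x) - Vt mu a0 a b y t psi - Vt mu a0 a b y t phi) / 2"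

primrec Vcross :: "'a measure \<Rightarrow> ('a \<Rightarrow> real) \<Rightarrow> (nat \<Rightarrow> 'a \<Rightarrow> 'a \<Rightarrow> real)
    \<Rightarrow> (nat \<Rightarrow> 'a \<Rightarrow> 'b \<Rightarrow> real) \<Rightarrow> (nat \<Rightarrow> 'b) \<Rightarrow> nat \<Rightarrow> nat
    \<Rightarrow> ('a \<Rightarrow> real) \<Rightarrow> ('a \<Rightarrow> real) \<Rightarrow> real" where
  "Vcross mu a0 a b y r 0 psir psit = Vdiag mu a0 a b y r psir psit"
| "Vcross mu a0 a b y r (Suc k) psir psit =
     inverse (kappa mu a0 a b y (r + Suc k)) *
     Vcross mu a0 a b y r k psir
       (Lop mu a b y (r + Suc k) (\<lambda>u. psit u - mt mu a0 a b y (r + Suc k) psit))"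

definition Vst :: "'a measure \<Rightarrow> ('a \<Rightarrow> real) \<Rightarrow> (nat \<Rightarrow> 'a \<Rightarrow> 'a \<Rightarrow> real)
    \<Rightarrow> (nat \<Rightarrow> 'a \<Rightarrow> 'b \<Rightarrow> real) \<Rightarrow> (nat \<Rightarrow> 'b) \<Rightarrow> nat \<Rightarrow> nat
    \<Rightarrow> ('a \<Rightarrow> real) \<Rightarrow> ('a \<Rightarrow> real) \<Rightarrow> real" where
  "Vst mu a0 a b y s t psis psit =
     (if s \<le> t then Vcross mu a0 a b y s (t - s) psis psit
      else Vcross mu a0 a b y t (s - t) psit psis)"

definition quadV :: "'a measure \<Rightarrow> ('a \<Rightarrow> real) \<Rightarrow> (nat \<Rightarrow> 'a \<Rightarrow> 'a \<Rightarrow> real)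
    \<Rightarrow> (nat \<Rightarrow> 'a \<Rightarrow> 'b \<Rightarrow> real) \<Rightarrow> (nat \<Rightarrow> 'b) \<Rightarrow> nat
    \<Rightarrow> (nat \<Rightarrow> 'a \<Rightarrow> real) \<Rightarrow> (nat \<Rightarrow> real) \<Rightarrow> real" where
  "quadV mu a0 a b y T psi lam =
     (\<Sum>s\<in>{0..T}. \<Sum>t\<in>{0..T}. lam s * lam t * Vst mu a0 a b y s t (psi s) (psi t))"

end

theory Submission
  imports Defs
begin

definition Hs :: "('a::euclidean_space \<Rightarrow> real) set" where
  "Hs = {f. f \<in> borel_measurable borel \<and> (\<exists>B. \<forall>x. \<bar>f x\<bar> \<le> B)}"

lemma H_lin: "f \<in> Hs \<Longrightarrow> g \<in> Hs \<Longrightarrow> (\<lambda>x. c * f x + d * g x) \<in> Hs"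
proof -
  assume f: "f \<in> Hs" and g: "g \<in> Hs"
  then obtain B1 B2 where b1: "\<And>x. \<bar>f x\<bar> \<le> B1" and b2: "\<And>x. \<bar>g x\<bar> \<le> B2" by (auto simp: Hs_def)
  have "\<bar>c * f x + d * g x\<bar> \<le> \<bar>c\<bar> * B1 + \<bar>d\<bar> * B2" for x
  proof -
    have "\<bar>c * f x + d * g x\<bar> \<le> \<bar>c\<bar> * \<bar>f x\<bar> + \<bar>d\<bar> * \<bar>g x\<bar>" by (simp add: abs_mult abs_triangle_ineq[THEN order_trans])
    also have "\<dots> \<le> \<bar>c\<bar> * B1 + \<bar>d\<bar> * B2" by (intro add_mono mult_left_mono b1 b2) auto
    finally show ?thesis .
  qed
  with f g show ?thesis by (auto simp: Hs_def)
qed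

lemma H_mult: "f \<in> Hs \<Longrightarrow> g \<in> Hs \<Longrightarrow> (\<lambda>x. f x * g x) \<in> Hs"
proof -
  assume f: "f \<in> Hs" and g: "g \<in> Hs"
  then obtain B1 B2 where b1: "\<And>x. \<bar>f x\<bar> \<le> B1" and b2: "\<And>x. \<bar>g x\<bar> \<le> B2" by (auto simp: Hs_def)
  have "\<bar>f x * g x\<bar> \<le> B1 * B2" for x
    unfolding abs_mult by (intro mult_mono b1 b2) (use b1[of x] in auto)
  with f g show ?thesis by (auto simp: Hs_def)
qed

lemma H_const: "(\<lambda>x. c) \<in> Hs"
  by (auto simp: Hs_def)

lemma H_diff_const: "f \<in> Hs \<Longrightarrow> (\<lambda>x. f x - c) \<in> Hs"
  using H_lin[of f "\<lambda>x. c" 1 "-1", OF _ H_const[of c]] by simp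

lemma H_integrable:
  assumes mu_sets: "sets mu = sets borel" and h: "h \<in> Hs" and f: "integrable mu f"
  shows "integrable mu (\<lambda>x. h x * f x)"
proof -
  obtain B where B: "\<And>x. \<bar>h x\<bar> \<le> B" using h by (auto simp: Hs_def)
  have hm: "h \<in> borel_measurable mu" using h measurable_cong_sets[OF mu_sets refl] by (auto simp: Hs_def)
  show ?thesis
  proof (rule Bochner_Integration.integrable_bound[where f="\<lambda>x. B * f x"])
    show "integrable mu (\<lambda>x. B * f x)" using f by simp
    show "(\<lambda>x. h x * f x) \<in> borel_measurable mu" using hm f by measurable
    have "\<bar>h x * f x\<bar> \<le> \<bar>B * f x\<bar>" for x
    proof -
      have "0 \<le> B" using B[of x] by linarith
      then show ?thesis unfolding abs_mult using B[of x] by (simp add: mult_right_mono)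
    qed
    then show "AE x in mu. norm (h x * f x) \<le> norm (B * f x)" by simp
  qed
qed

definition isB :: "(('a::euclidean_space \<Rightarrow> real) \<Rightarrow> ('a \<Rightarrow> real) \<Rightarrow> real) \<Rightarrow> bool" where
  "isB B \<longleftrightarrow> (\<forall>f\<in>Hs. \<forall>g\<in>Hs. B f g = B g f) \<and>
     (\<forall>f\<in>Hs. \<forall>g\<in>Hs. \<forall>h\<in>Hs. \<forall>c d. B (\<lambda>x. c * f x + d * g x) h = c * B f h + d * B g h)"

lemma isB_left: "isB B \<Longrightarrow> f \<in> Hs \<Longrightarrow> g \<in> Hs \<Longrightarrow> h \<in> Hs \<Longrightarrow>
   B (\<lambda>x. c * f x + d * g x) h = c * B f h + d * B g h"
  unfolding isB_def by blast

lemma isB_sym: "isB B \<Longrightarrow> f \<in> Hs \<Longrightarrow> g \<in> Hs \<Longrightarrow> B f g = B g f"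
  unfolding isB_def by blast

lemma isB_right: "isB B \<Longrightarrow> f \<in> Hs \<Longrightarrow> g \<in> Hs \<Longrightarrow> h \<in> Hs \<Longrightarrow>
   B h (\<lambda>x. c * f x + d * g x) = c * B h f + d * B h g"
  using isB_sym[of B h] isB_left[of B f g h c d] H_lin[of f g c d] by (metis isB_sym)

lemma onefun_H: "onefun \<in> Hs"
  unfolding onefun_def by (rule H_const)

lemma dsplit:
  fixes f :: "nat \<Rightarrow> nat \<Rightarrow> real"
  shows "(\<Sum>s<Suc m. \<Sum>t<Suc m. f s t) = (\<Sum>s<m. \<Sum>t<m. f s t) + (\<Sum>s<m. f s m + f m s) + f m m"
  by (simp add: sum.distrib)

locale hmm =
  fixes mu :: "('a::euclidean_space) measure"
    and a0 :: "'a \<Rightarrow> real"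
    and a :: "nat \<Rightarrow> 'a \<Rightarrow> 'a \<Rightarrow> real"
    and b :: "nat \<Rightarrow> 'a \<Rightarrow> 'b \<Rightarrow> real"
    and y :: "nat \<Rightarrow> 'b"
    and T :: nat
  assumes mu_sets: "sets mu = sets borel"
    and mu_sf: "sigma_finite_measure mu"
    and a0_int: "integrable mu a0"
    and a_meas: "\<And>t. (\<lambda>(x, u). a t x u) \<in> borel_measurable borel"
    and a_nonneg: "\<And>t x u. a t x u \<ge> 0"
    and b_meas: "\<And>t. (\<lambda>x. b t x (y t)) \<in> borel_measurable borel"
    and b_nonneg: "\<And>t x v. b t x v \<ge> 0"
    and A0_bdd: "\<And>t. 1 \<le> t \<Longrightarrow> t \<le> T \<Longrightarrow> bdd_above (range (Lop mu a b y t onefun))"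
    and A0_pos: "\<And>t x. 1 \<le> t \<Longrightarrow> t \<le> T \<Longrightarrow> Lop mu a b y t onefun x > 0"
begin

lemma filt_int: "integrable mu (filt mu a0 a b y t)"
proof (cases t)
  case 0
  then show ?thesis using a0_int by simp
next
  case (Suc s)
  define g where "g = (\<lambda>x. b (Suc s) x (y (Suc s)) * (\<integral>u. filt mu a0 a b y s u * a (Suc s) u x \<partial>mu))"
  have e: "filt mu a0 a b y t = (\<lambda>x. g x / (\<integral>z. g z \<partial>mu))"
    by (simp add: Suc g_def Let_def)
  show ?thesis
  proof (cases "integrable mu g")
    case True
    then show ?thesis unfolding e by simp
  next
    case False
    then show ?thesis unfolding e by (simp add: not_integrable_integral_eq)
  qed
qed

lemma mt_lin:
  assumes "f \<in> Hs" "g \<in> Hs"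
  shows "mt mu a0 a b y t (\<lambda>x. c * f x + d * g x) = c * mt mu a0 a b y t f + d * mt mu a0 a b y t g"
proof -
  have i1: "integrable mu (\<lambda>x. f x * filt mu a0 a b y t x)"
    using H_integrable[OF mu_sets assms(1) filt_int] .
  have i2: "integrable mu (\<lambda>x. g x * filt mu a0 a b y t x)"
    using H_integrable[OF mu_sets assms(2) filt_int] .
  have "mt mu a0 a b y t (\<lambda>x. c * f x + d * g x) =
     (\<integral>x. c * (f x * filt mu a0 a b y t x) + d * (g x * filt mu a0 a b y t x) \<partial>mu)"
    unfolding mt_def by (simp add: algebra_simps)
  also have "\<dots> = c * mt mu a0 a b y t f + d * mt mu a0 a b y t g"
    using i1 i2 unfolding mt_def by simp
  finally show ?thesis .
qed

lemma Lop_int1: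
  assumes "1 \<le> t" "t \<le> T"
  shows "integrable mu (\<lambda>u. a t x u * b t u (y t))"
proof (rule ccontr)
  assume "\<not> ?thesis"
  then have "Lop mu a b y t onefun x = 0"
    by (simp add: Lop_def onefun_def not_integrable_integral_eq)
  with A0_pos[OF assms, of x] show False by simp
qed

lemma Lop_int:
  assumes "1 \<le> t" "t \<le> T" "f \<in> Hs"
  shows "integrable mu (\<lambda>u. a t x u * b t u (y t) * f u)"
  using H_integrable[OF mu_sets assms(3) Lop_int1[OF assms(1,2), of x]]
  by (simp add: mult.commute)

lemma Lop_lin:
  assumes "1 \<le> t" "t \<le> T" "f \<in> Hs" "g \<in> Hs"
  shows "Lop mu a b y t (\<lambda>x. c * f x + d * g x) x = c * Lop mu a b y t f x + d * Lop mu a b y t g x"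
proof -
  have "Lop mu a b y t (\<lambda>x. c * f x + d * g x) x =
     (\<integral>u. c * (a t x u * b t u (y t) * f u) + d * (a t x u * b t u (y t) * g u) \<partial>mu)"
    unfolding Lop_def by (simp add: algebra_simps)
  also have "\<dots> = c * Lop mu a b y t f x + d * Lop mu a b y t g x"
    using Lop_int[OF assms(1,2,3), of x] Lop_int[OF assms(1,2,4), of x] unfolding Lop_def by simp
  finally show ?thesis .
qed

lemma Lop_fun_lin:
  assumes "1 \<le> t" "t \<le> T" "f \<in> Hs" "g \<in> Hs"
  shows "Lop mu a b y t (\<lambda>x. c * f x + d * g x) = (\<lambda>x. c * Lop mu a b y t f x + d * Lop mu a b y t g x)"
  using Lop_lin[OF assms] by auto

lemma Lop_meas:
  assumes "f \<in> Hs"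
  shows "Lop mu a b y t f \<in> borel_measurable borel"
proof -
  have fm: "f \<in> borel_measurable borel" using assms by (auto simp: Hs_def)
  have "(\<lambda>(x, u). a t x u * b t u (y t) * f u) \<in> borel_measurable (borel \<Otimes>\<^sub>M borel)"
  proof -
    have am: "(\<lambda>(x, u). a t x u) \<in> borel_measurable (borel \<Otimes>\<^sub>M borel)"
      using a_meas[of t] by (simp add: borel_prod)
    have bm: "(\<lambda>p. b t (snd p) (y t)) \<in> borel_measurable (borel \<Otimes>\<^sub>M borel)"
      using b_meas[of t] by measurable
    have fm2: "(\<lambda>p. f (snd p)) \<in> borel_measurable (borel \<Otimes>\<^sub>M borel)"
      using fm by measurable
    have "(\<lambda>p. (\<lambda>(x, u). a t x u) p * b t (snd p) (y t) * f (snd p)) \<in> borel_measurable (borel \<Otimes>\<^sub>M borel)"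
      using am bm fm2 by measurable
    then show ?thesis by (simp add: case_prod_beta)
  qed
  then have "(\<lambda>(x, u). a t x u * b t u (y t) * f u) \<in> borel_measurable (borel \<Otimes>\<^sub>M mu)"
    by (subst measurable_cong_sets[OF sets_pair_measure_cong[OF refl mu_sets] refl]) simp
  from sigma_finite_measure.borel_measurable_lebesgue_integral[OF mu_sf this]
  show ?thesis unfolding Lop_def[abs_def] by simp
qed

lemma Lop_H:
  assumes "1 \<le> t" "t \<le> T" "f \<in> Hs"
  shows "Lop mu a b y t f \<in> Hs"
proof -
  obtain B where B: "\<And>x. \<bar>f x\<bar> \<le> B" using assms(3) by (auto simp: Hs_def)
  obtain S where S: "\<And>x. Lop mu a b y t onefun x \<le> S" using A0_bdd[OF assms(1,2)]
    by (auto simp: bdd_above_def)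
  have B0: "0 \<le> B" using B[of undefined] by linarith
  have "\<bar>Lop mu a b y t f x\<bar> \<le> B * S" for x
  proof -
    have "\<bar>Lop mu a b y t f x\<bar> \<le> (\<integral>u. B * (a t x u * b t u (y t)) \<partial>mu)"
      unfolding Lop_def
    proof (rule integral_abs_bound_integral)
      show "integrable mu (\<lambda>u. a t x u * b t u (y t) * f u)" by (rule Lop_int[OF assms])
      show "integrable mu (\<lambda>u. B * (a t x u * b t u (y t)))" using Lop_int1[OF assms(1,2)] by simp
      fix u
      have "0 \<le> a t x u * b t u (y t)" using a_nonneg b_nonneg by simp
      have "\<bar>a t x u * b t u (y t) * f u\<bar> = (a t x u * b t u (y t)) * \<bar>f u\<bar>"
        by (simp add: abs_mult a_nonneg b_nonneg)
      also have "\<dots> \<le> (a t x u * b t u (y t)) * B"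
        using B[of u] \<open>0 \<le> a t x u * b t u (y t)\<close> by (rule mult_left_mono)
      finally show "\<bar>a t x u * b t u (y t) * f u\<bar> \<le> B * (a t x u * b t u (y t))"
        by (simp add: mult.commute)
    qed
    also have "\<dots> = B * Lop mu a b y t onefun x" by (simp add: Lop_def onefun_def)
    also have "\<dots> \<le> B * S" using S B0 by (simp add: mult_left_mono)
    finally show ?thesis .
  qed
  then show ?thesis using Lop_meas[OF assms(3)] by (auto simp: Hs_def)
qed

lemma sigma2_qf: "\<exists>B. isB B \<and> (\<forall>f\<in>Hs. sigma2 mu a0 a b y t f = B f f)"
proof -
  define F where "F = filt mu a0 a b y t"
  define m where "m = mt mu a0 a b y t"
  define B where "B = (\<lambda>f g. \<integral>x. (f x - m f) * (g x - m g) * F x \<partial>mu)"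
  have intg: "integrable mu (\<lambda>x. (f x - m f) * (g x - m g) * F x)" if "f \<in> Hs" "g \<in> Hs" for f g
    using H_integrable[OF mu_sets H_mult[OF H_diff_const[OF that(1)] H_diff_const[OF that(2)]] filt_int]
    unfolding F_def by simp
  have "isB B"
    unfolding isB_def
  proof (intro conjI ballI allI)
    fix f g :: "'a \<Rightarrow> real" assume "f \<in> Hs" "g \<in> Hs"
    show "B f g = B g f" unfolding B_def by (simp add: mult.commute mult.left_commute)
  next
    fix f g h :: "'a \<Rightarrow> real" and c d :: real assume fgh: "f \<in> Hs" "g \<in> Hs" "h \<in> Hs"
    have "B (\<lambda>x. c * f x + d * g x) h =
      (\<integral>x. c * ((f x - m f) * (h x - m h) * F x) + d * ((g x - m g) * (h x - m h) * F x) \<partial>mu)"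
      unfolding B_def m_def mt_lin[OF fgh(1,2)] by (simp add: algebra_simps)
    also have "\<dots> = c * B f h + d * B g h"
      using intg[OF fgh(1,3)] intg[OF fgh(2,3)] unfolding B_def by simp
    finally show "B (\<lambda>x. c * f x + d * g x) h = c * B f h + d * B g h" .
  qed
  moreover have "\<forall>f\<in>Hs. sigma2 mu a0 a b y t f = B f f"
    unfolding B_def sigma2_def F_def m_def by (simp add: power2_eq_square)
  ultimately show ?thesis by blast
qed

definition "Gop t f = (\<lambda>x. Lop mu a b y t f x - mt mu a0 a b y t f * Lop mu a b y t onefun x)"

lemma Gop_H: "1 \<le> t \<Longrightarrow> t \<le> T \<Longrightarrow> f \<in> Hs \<Longrightarrow> Gop t f \<in> Hs"
  unfolding Gop_def using H_lin[OF Lop_H Lop_H[OF _ _ onefun_H], of t f t 1 "- mt mu a0 a b y t f"]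
  by simp

lemma Gop_lin: "1 \<le> t \<Longrightarrow> t \<le> T \<Longrightarrow> f \<in> Hs \<Longrightarrow> g \<in> Hs \<Longrightarrow>
  Gop t (\<lambda>x. c * f x + d * g x) = (\<lambda>x. c * Gop t f x + d * Gop t g x)"
  unfolding Gop_def by (auto simp: Lop_lin mt_lin algebra_simps)

lemma Vt_qf: "t \<le> T \<Longrightarrow> \<exists>B. isB B \<and> (\<forall>f\<in>Hs. Vt mu a0 a b y t f = B f f)"
proof (induction t)
  case 0
  then show ?case using sigma2_qf[of 0] by simp
next
  case (Suc t)
  then obtain B where B: "isB B" "\<forall>f\<in>Hs. Vt mu a0 a b y t f = B f f" by auto
  obtain S where S: "isB S" "\<forall>f\<in>Hs. sigma2 mu a0 a b y (Suc t) f = S f f" using sigma2_qf by blast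
  define k where "k = (kappa mu a0 a b y (Suc t))\<^sup>2 powi (-1)"
  define B' where "B' = (\<lambda>f g. S f g + k * B (Gop (Suc t) f) (Gop (Suc t) g))"
  have st: "1 \<le> Suc t" "Suc t \<le> T" using Suc.prems by auto
  have "isB B'"
    unfolding isB_def
  proof (intro conjI ballI allI)
    fix f g :: "'a \<Rightarrow> real" assume fg: "f \<in> Hs" "g \<in> Hs"
    show "B' f g = B' g f" unfolding B'_def
      using isB_sym[OF S(1) fg] isB_sym[OF B(1) Gop_H[OF st fg(1)] Gop_H[OF st fg(2)]] by simp
  next
    fix f g h :: "'a \<Rightarrow> real" and c d :: real assume fgh: "f \<in> Hs" "g \<in> Hs" "h \<in> Hs"
    show "B' (\<lambda>x. c * f x + d * g x) h = c * B' f h + d * B' g h"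
      unfolding B'_def Gop_lin[OF st fgh(1,2)]
      using isB_left[OF S(1) fgh] isB_left[OF B(1) Gop_H[OF st fgh(1)] Gop_H[OF st fgh(2)] Gop_H[OF st fgh(3)]]
      by (simp add: algebra_simps)
  qed
  moreover have "\<forall>f\<in>Hs. Vt mu a0 a b y (Suc t) f = B' f f"
    using S(2) B(2) Gop_H[OF st] unfolding B'_def k_def Gop_def by simp
  ultimately show ?case by blast
qed

lemma Vdiag_B:
  assumes B: "isB B" "\<forall>f\<in>Hs. Vt mu a0 a b y t f = B f f" and fg: "f \<in> Hs" "g \<in> Hs"
  shows "Vdiag mu a0 a b y t f g = B f g"
proof -
  have e: "(\<lambda>x. f x + g x) = (\<lambda>x. 1 * f x + 1 * g x)" by simp
  have s: "(\<lambda>x. f x + g x) \<in> Hs" using H_lin[OF fg, of 1 1] by simp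
  have "Vt mu a0 a b y t (\<lambda>x. f x + g x) = B f f + 2 * B f g + B g g"
    using B(2) s isB_left[OF B(1) fg s, of 1 1] isB_right[OF B(1) fg fg(1), of 1 1]
      isB_right[OF B(1) fg fg(2), of 1 1] isB_sym[OF B(1) fg] unfolding e by simp
  then show ?thesis unfolding Vdiag_def using B(2) fg by simp
qed

lemma Vdiag_props:
  assumes "t \<le> T"
  shows "\<And>f g h c d. f \<in> Hs \<Longrightarrow> g \<in> Hs \<Longrightarrow> h \<in> Hs \<Longrightarrow>
      Vdiag mu a0 a b y t h (\<lambda>x. c * f x + d * g x) = c * Vdiag mu a0 a b y t h f + d * Vdiag mu a0 a b y t h g"
    and "\<And>f g. f \<in> Hs \<Longrightarrow> g \<in> Hs \<Longrightarrow> Vdiag mu a0 a b y t f g = Vdiag mu a0 a b y t g f"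
    and "\<And>f. f \<in> Hs \<Longrightarrow> Vdiag mu a0 a b y t f f = Vt mu a0 a b y t f"
proof -
  obtain B where B: "isB B" "\<forall>f\<in>Hs. Vt mu a0 a b y t f = B f f" using Vt_qf[OF assms] by blast
  show "\<And>f g h c d. f \<in> Hs \<Longrightarrow> g \<in> Hs \<Longrightarrow> h \<in> Hs \<Longrightarrow>
      Vdiag mu a0 a b y t h (\<lambda>x. c * f x + d * g x) = c * Vdiag mu a0 a b y t h f + d * Vdiag mu a0 a b y t h g"
  proof -
    fix f g h :: "'a \<Rightarrow> real" and c d :: real
    assume fgh: "f \<in> Hs" "g \<in> Hs" "h \<in> Hs"
    show "Vdiag mu a0 a b y t h (\<lambda>x. c * f x + d * g x) = c * Vdiag mu a0 a b y t h f + d * Vdiag mu a0 a b y t h g"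
      using Vdiag_B[OF B fgh(3) H_lin[OF fgh(1,2)]] Vdiag_B[OF B fgh(3) fgh(1)] Vdiag_B[OF B fgh(3) fgh(2)]
        isB_right[OF B(1) fgh] by simp
  qed
  show "\<And>f g. f \<in> Hs \<Longrightarrow> g \<in> Hs \<Longrightarrow> Vdiag mu a0 a b y t f g = Vdiag mu a0 a b y t g f"
    using Vdiag_B[OF B] isB_sym[OF B(1)] by simp
  show "\<And>f. f \<in> Hs \<Longrightarrow> Vdiag mu a0 a b y t f f = Vt mu a0 a b y t f"
    using Vdiag_B[OF B] B(2) by simp
qed

definition "Fop t f = Lop mu a b y t (\<lambda>u. f u - mt mu a0 a b y t f)"

lemma Fop_H: "1 \<le> t \<Longrightarrow> t \<le> T \<Longrightarrow> f \<in> Hs \<Longrightarrow> Fop t f \<in> Hs"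
  unfolding Fop_def by (intro Lop_H H_diff_const)

lemma Fop_lin: "1 \<le> t \<Longrightarrow> t \<le> T \<Longrightarrow> f \<in> Hs \<Longrightarrow> g \<in> Hs \<Longrightarrow>
  Fop t (\<lambda>x. c * f x + d * g x) = (\<lambda>x. c * Fop t f x + d * Fop t g x)"
proof -
  assume st: "1 \<le> t" "t \<le> T" and fg: "f \<in> Hs" "g \<in> Hs"
  have "(\<lambda>u. c * f u + d * g u - mt mu a0 a b y t (\<lambda>x. c * f x + d * g x)) =
      (\<lambda>u. c * (f u - mt mu a0 a b y t f) + d * (g u - mt mu a0 a b y t g))"
    using mt_lin[OF fg] by (simp add: algebra_simps)
  then show ?thesis unfolding Fop_def
    using Lop_lin[OF st H_diff_const[OF fg(1)] H_diff_const[OF fg(2)]] by auto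
qed

lemma Fop_Gop: "1 \<le> t \<Longrightarrow> t \<le> T \<Longrightarrow> f \<in> Hs \<Longrightarrow> Fop t f = Gop t f"
proof -
  assume st: "1 \<le> t" "t \<le> T" and f: "f \<in> Hs"
  have "(\<lambda>u. f u - mt mu a0 a b y t f) = (\<lambda>u. 1 * f u + (- mt mu a0 a b y t f) * onefun u)"
    by (simp add: onefun_def)
  then show ?thesis unfolding Fop_def Gop_def
    using Lop_fun_lin[OF st f onefun_H, of 1 "- mt mu a0 a b y t f"] by simp
qed

lemma Vcross_lin:
  "s + k \<le> T \<Longrightarrow> h \<in> Hs \<Longrightarrow> f \<in> Hs \<Longrightarrow> g \<in> Hs \<Longrightarrow>
   Vcross mu a0 a b y s k h (\<lambda>x. c * f x + d * g x) = c * Vcross mu a0 a b y s k h f + d * Vcross mu a0 a b y s k h g"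
proof (induction k arbitrary: f g c d)
  case 0
  then show ?case using Vdiag_props(1)[of s f g h c d] by simp
next
  case (Suc k)
  have st: "1 \<le> s + Suc k" "s + Suc k \<le> T" using Suc.prems by auto
  define t where "t = s + Suc k"
  have V: "Vcross mu a0 a b y s (Suc k) h p = inverse (kappa mu a0 a b y t) * Vcross mu a0 a b y s k h (Fop t p)" for p
    by (simp add: Fop_def t_def)
  have IH: "Vcross mu a0 a b y s k h (\<lambda>x. c * Fop t f x + d * Fop t g x) =
      c * Vcross mu a0 a b y s k h (Fop t f) + d * Vcross mu a0 a b y s k h (Fop t g)"
    using Suc.IH[OF _ Suc.prems(2) Fop_H[OF st Suc.prems(3)] Fop_H[OF st Suc.prems(4)], of c d] Suc.prems(1)
    unfolding t_def by simp
  show ?case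
    unfolding V Fop_lin[OF st[folded t_def] Suc.prems(3,4)] IH by (simp add: algebra_simps)
qed

lemma main:
  fixes psi :: "nat \<Rightarrow> 'a \<Rightarrow> real" and lam :: "nat \<Rightarrow> real"
  assumes T1: "T \<ge> 1" and psiH: "\<And>t. t \<le> T \<Longrightarrow> psi t \<in> Hs"
  shows
    "(let rho = (\<lambda>x. lam (T - 1) * psi (T - 1) x
                   + lam T / kappa mu a0 a b y T *
                     Lop mu a b y T (\<lambda>u. psi T u - mt mu a0 a b y T (psi T)) x)
      in quadV mu a0 a b y (T - 1) (psi((T - 1) := rho)) (lam((T - 1) := 1)))
     = quadV mu a0 a b y T psi lam - (lam T)\<^sup>2 * sigma2 mu a0 a b y T (psi T)"
proof -
  obtain n where Tn: "T = Suc n" using T1 by (cases T) auto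
  define K where "K = kappa mu a0 a b y T"
  define chi where "chi = Lop mu a b y T (\<lambda>u. psi T u - mt mu a0 a b y T (psi T))"
  define d where "d = lam T / K"
  define rho where "rho = (\<lambda>x. lam n * psi n x + d * chi x)"
  define V where "V = (\<lambda>s t. Vst mu a0 a b y s t (psi s) (psi t))"
  define C where "C = (\<lambda>s. Vst mu a0 a b y s n (psi s) chi)"
  define D where "D = Vdiag mu a0 a b y n chi chi"
  define S0 where "S0 = (\<Sum>s<n. \<Sum>t<n. lam s * lam t * V s t)"
  have T1': "1 \<le> T" "T \<le> T" using T1 by auto
  have chiH: "chi \<in> Hs" unfolding chi_def using Fop_H[OF T1' psiH[of T]] by (simp add: Fop_def)
  have psinH: "psi n \<in> Hs" using psiH Tn by simp
  have chiG: "chi = Gop T (psi T)" unfolding chi_def using Fop_Gop[OF T1' psiH[of T]] by (simp add: Fop_def)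
  have nT: "n \<le> T" using Tn by simp
  have F1: "V s T = inverse K * C s" "V T s = inverse K * C s" if "s \<le> n" for s
  proof -
    have e1: "T - s = Suc (n - s)" "s + Suc (n - s) = T" using that Tn by auto
    have "V s T = inverse K * C s"
      unfolding V_def C_def Vst_def K_def chi_def using that by (simp add: Tn Suc_diff_le)
    moreover have "V T s = V s T" unfolding V_def Vst_def using that Tn by simp
    ultimately show "V s T = inverse K * C s" "V T s = inverse K * C s" by simp_all
  qed
  have F3: "V T T = sigma2 mu a0 a b y T (psi T) + inverse (K\<^sup>2) * D"
  proof -
    have "V T T = Vt mu a0 a b y T (psi T)"
      unfolding V_def Vst_def using Vdiag_props(3)[OF T1'(2) psiH[of T]] by simp
    also have "\<dots> = sigma2 mu a0 a b y T (psi T) + inverse (K\<^sup>2) * Vt mu a0 a b y n chi"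
      unfolding Tn chiG Gop_def K_def by (simp add: Tn power_int_minus)
    also have "Vt mu a0 a b y n chi = D" unfolding D_def using Vdiag_props(3)[OF nT chiH] by simp
    finally show ?thesis .
  qed
  have F4: "V n s = V s n" if "s < n" for s unfolding V_def Vst_def using that by simp
  have Cn: "C n = Vdiag mu a0 a b y n (psi n) chi" unfolding C_def Vst_def by simp
  have Vnn: "V n n = Vdiag mu a0 a b y n (psi n) (psi n)" unfolding V_def Vst_def by simp
  have L1: "Vst mu a0 a b y s n (psi s) rho = lam n * V s n + d * C s"
           "Vst mu a0 a b y n s rho (psi s) = lam n * V s n + d * C s" if "s < n" for s
  proof -
    have "Vst mu a0 a b y s n (psi s) rho = lam n * V s n + d * C s"
      unfolding V_def C_def Vst_def rho_def using that
      Vcross_lin[of s "n - s" "psi s" "psi n" chi "lam n" d] psiH[of s] psinH chiH nT by simp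
    moreover have "Vst mu a0 a b y n s rho (psi s) = Vst mu a0 a b y s n (psi s) rho"
      unfolding Vst_def using that by simp
    ultimately show "Vst mu a0 a b y s n (psi s) rho = lam n * V s n + d * C s"
           "Vst mu a0 a b y n s rho (psi s) = lam n * V s n + d * C s" by simp_all
  qed
  have L2: "Vst mu a0 a b y n n rho rho = (lam n)\<^sup>2 * V n n + 2 * lam n * d * C n + d\<^sup>2 * D"
  proof -
    have rH: "rho \<in> Hs" unfolding rho_def by (rule H_lin[OF psinH chiH])
    have "Vst mu a0 a b y n n rho rho = Vdiag mu a0 a b y n rho rho" unfolding Vst_def by simp
    also have "\<dots> = lam n * Vdiag mu a0 a b y n rho (psi n) + d * Vdiag mu a0 a b y n rho chi"
      unfolding rho_def[of] using Vdiag_props(1)[OF nT psinH chiH rH] by (simp add: rho_def)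
    also have "Vdiag mu a0 a b y n rho (psi n) = lam n * V n n + d * C n"
      using Vdiag_props(2)[OF nT rH psinH] Vdiag_props(1)[OF nT psinH chiH psinH] Vdiag_props(2)[OF nT chiH psinH]
      unfolding Cn Vnn rho_def by simp
    also have "Vdiag mu a0 a b y n rho chi = lam n * C n + d * D"
      using Vdiag_props(2)[OF nT rH chiH] Vdiag_props(1)[OF nT psinH chiH chiH] Vdiag_props(2)[OF nT chiH psinH]
      unfolding Cn D_def rho_def by simp
    finally show ?thesis by (simp add: power2_eq_square algebra_simps)
  qed
  have qe: "quadV mu a0 a b y m p l = (\<Sum>s<Suc m. \<Sum>t<Suc m. l s * l t * Vst mu a0 a b y s t (p s) (p t))" for m p l
    unfolding quadV_def by (simp add: atLeast0AtMost lessThan_Suc_atMost)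
  have LHS: "quadV mu a0 a b y n (psi(n := rho)) (lam(n := 1)) =
     S0 + (\<Sum>s<n. 2 * lam s * (lam n * V s n + d * C s)) + ((lam n)\<^sup>2 * V n n + 2 * lam n * d * C n + d\<^sup>2 * D)"
    unfolding qe dsplit S0_def
    by (intro arg_cong2[where f="(+)"] sum.cong refl) (auto simp: V_def L1 L2)
  have RHS: "quadV mu a0 a b y T psi lam =
     S0 + (\<Sum>s<n. 2 * lam s * lam n * V s n) + (lam n)\<^sup>2 * V n n
     + ((\<Sum>s<n. 2 * lam s * lam T * inverse K * C s) + 2 * lam n * lam T * inverse K * C n)
     + (lam T)\<^sup>2 * V T T"
  proof -
    have Vf: "Vst mu a0 a b y s t (psi s) (psi t) = V s t" for s t by (simp add: V_def)
    have "quadV mu a0 a b y T psi lam = (\<Sum>s<Suc (Suc n). \<Sum>t<Suc (Suc n). lam s * lam t * V s t)"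
      unfolding qe Tn Vf ..
    also have "\<dots> = (S0 + (\<Sum>s<n. lam s * lam n * V s n + lam n * lam s * V n s) + lam n * lam n * V n n)
       + (\<Sum>s<Suc n. lam s * lam (Suc n) * V s (Suc n) + lam (Suc n) * lam s * V (Suc n) s)
       + lam (Suc n) * lam (Suc n) * V (Suc n) (Suc n)"
      unfolding dsplit S0_def ..
    also have "(\<Sum>s<n. lam s * lam n * V s n + lam n * lam s * V n s) = (\<Sum>s<n. 2 * lam s * lam n * V s n)"
      by (intro sum.cong refl) (simp add: F4)
    also have "(\<Sum>s<Suc n. lam s * lam (Suc n) * V s (Suc n) + lam (Suc n) * lam s * V (Suc n) s) =
       (\<Sum>s<n. 2 * lam s * lam T * inverse K * C s) + 2 * lam n * lam T * inverse K * C n"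
      unfolding sum.lessThan_Suc[of _ n] unfolding Tn[symmetric]
      by (intro arg_cong2[where f="(+)"] sum.cong refl) (simp_all add: F1)
    finally show ?thesis unfolding Tn[symmetric] by (simp add: power2_eq_square)
  qed
  have sumeq: "(\<Sum>s<n. 2 * lam s * (lam n * V s n + d * C s)) =
      (\<Sum>s<n. 2 * lam s * lam n * V s n) + (\<Sum>s<n. 2 * lam s * lam T * inverse K * C s)"
    unfolding sum.distrib[symmetric] d_def by (intro sum.cong refl) (simp add: algebra_simps divide_inverse)
  have eqrho: "(let rho = (\<lambda>x. lam (T - 1) * psi (T - 1) x
                   + lam T / kappa mu a0 a b y T *
                     Lop mu a b y T (\<lambda>u. psi T u - mt mu a0 a b y T (psi T)) x)
      in quadV mu a0 a b y (T - 1) (psi((T - 1) := rho)) (lam((T - 1) := 1)))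
     = quadV mu a0 a b y n (psi(n := rho)) (lam(n := 1))"
    by (simp add: Let_def Tn rho_def d_def chi_def K_def)
  have d1: "2 * lam n * d * C n = 2 * lam n * lam T * inverse K * C n" by (simp add: d_def divide_inverse)
  have d2: "d\<^sup>2 * D = (lam T)\<^sup>2 * (inverse (K\<^sup>2) * D)" by (simp add: d_def divide_inverse power_mult_distrib power_inverse)
  show ?thesis
    unfolding eqrho LHS RHS F3 sumeq d1 d2 by (simp add: algebra_simps)
qed

end

theorem mainTheorem3:
  fixes mu :: "('a::euclidean_space) measure"
    and a0 :: "'a \<Rightarrow> real"
    and a :: "nat \<Rightarrow> 'a \<Rightarrow> 'a \<Rightarrow> real"
    and b :: "nat \<Rightarrow> 'a \<Rightarrow> 'b \<Rightarrow> real"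
    and y :: "nat \<Rightarrow> 'b"
    and T :: nat
    and psi :: "nat \<Rightarrow> 'a \<Rightarrow> real"
    and lam :: "nat \<Rightarrow> real"
  assumes mu_sets: "sets mu = sets borel"
    and mu_sf: "sigma_finite_measure mu"
    and a0_meas: "a0 \<in> borel_measurable borel"
    and a0_nonneg: "\<And>x. a0 x \<ge> 0"
    and a0_int: "integrable mu a0" and a0_norm: "(\<integral>x. a0 x \<partial>mu) = 1"
    and a_meas: "\<And>t. (\<lambda>(x, u). a t x u) \<in> borel_measurable borel"
    and a_nonneg: "\<And>t x u. a t x u \<ge> 0"
    and a_int: "\<And>t x. integrable mu (a t x)"
    and a_norm: "\<And>t x. (\<integral>u. a t x u \<partial>mu) = 1"
    and b_meas: "\<And>t. (\<lambda>x. b t x (y t)) \<in> borel_measurable borel"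
    and b_nonneg: "\<And>t x v. b t x v \<ge> 0"
    and A0_bdd: "\<And>t. 1 \<le> t \<Longrightarrow> t \<le> T \<Longrightarrow> bdd_above (range (Lop mu a b y t onefun))"
    and A0_pos: "\<And>t x. 1 \<le> t \<Longrightarrow> t \<le> T \<Longrightarrow> Lop mu a b y t onefun x > 0"
    and A0_kappa: "\<And>t. 1 \<le> t \<Longrightarrow> t \<le> T \<Longrightarrow> kappa mu a0 a b y t > 0"
    and T_ge: "T \<ge> 1"
    and psi_meas: "\<And>t. t \<le> T \<Longrightarrow> psi t \<in> borel_measurable borel"
    and psi_bdd: "\<And>t. t \<le> T \<Longrightarrow> bounded (range (psi t))"
  shows
    "(let rho = (\<lambda>x. lam (T - 1) * psi (T - 1) x
                   + lam T / kappa mu a0 a b y T *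
                     Lop mu a b y T (\<lambda>u. psi T u - mt mu a0 a b y T (psi T)) x)
      in quadV mu a0 a b y (T - 1) (psi((T - 1) := rho)) (lam((T - 1) := 1)))
     = quadV mu a0 a b y T psi lam - (lam T)\<^sup>2 * sigma2 mu a0 a b y T (psi T)"
proof -
  interpret hmm mu a0 a b y T
    by (rule hmm.intro[OF mu_sets mu_sf a0_int a_meas a_nonneg b_meas b_nonneg A0_bdd A0_pos])
  have psiH: "psi t \<in> Hs" if tT: "t \<le> T" for t
  proof -
    obtain B where "\<forall>z\<in>range (psi t). norm z \<le> B" using psi_bdd[OF tT] unfolding bounded_iff by blast
    then have "\<forall>x. \<bar>psi t x\<bar> \<le> B" by simp
    then show ?thesis using psi_meas[OF tT] by (auto simp: Hs_def)
  qed
  show ?thesis by (rule main[OF T_ge psiH])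
qed

end
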